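(* If a graph $G$ is $\mathbb{Z}_3$-colorable, then $G$ is $\mathbb{Z}_5$-colorable.
   Context: Graphs are finite, may have multiple edges but no loops. For an Abelian group $\Gamma$, $G$ is $\Gamma$-colorable if for some (equivalently, any) orientation $D$ of $G$ and every $\varphi:E(G)\to\Gamma$ there is $c:V(G)\to\Gamma$ with $c(w)-c(u)\neq\varphi(uw)$ for every directed edge $uw$ of $D$. *)

theory Defs
  imports Main "HOL-Library.Numeral_Type"
begin

text \<open>A finite loopless multigraph G, given together with an orientation D:
  vertex set V, edge set E, each edge e directed from src e to tgt e.\<close>

definition loopless_multigraph :: "'v set \<Rightarrow> 'e set \<Rightarrow> ('e \<Rightarrow> 'v) \<Rightarrow> ('e \<Rightarrow> 'v) \<Rightarrow> bool" where
  "loopless_multigraph V E src tgt \<longleftrightarrow>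
     finite V \<and> finite E \<and> (\<forall>e\<in>E. src e \<in> V \<and> tgt e \<in> V \<and> src e \<noteq> tgt e)"

text \<open>Gamma-colorability (group colorability) w.r.t. the orientation given by src/tgt;
  the abelian group Gamma is the type 'g.\<close>

definition group_colorable ::
  "'v set \<Rightarrow> 'e set \<Rightarrow> ('e \<Rightarrow> 'v) \<Rightarrow> ('e \<Rightarrow> 'v) \<Rightarrow> 'g::ab_group_add itself \<Rightarrow> bool" where
  "group_colorable V E src tgt (_::'g itself) \<longleftrightarrow>
     (\<forall>\<phi>::'e \<Rightarrow> 'g. \<exists>c::'v \<Rightarrow> 'g. \<forall>e\<in>E. c (tgt e) - c (src e) \<noteq> \<phi> e)"

end

theory Submission
  imports Defs
begin

lemma z3_cases: "(a::3) = 0 \<or> a = 1 \<or> a = 2"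
proof (cases a)
  case (of_int z)
  then have "z = 0 \<or> z = 1 \<or> z = 2" by auto
  then show ?thesis using of_int by auto
qed

definition f5 :: "5 \<Rightarrow> 3" where
  "f5 x = (if x = 0 then 0 else if x = 1 then 1 else if x = 2 then 2 else if x = 3 then 1 else 2)"

definition g3 :: "3 \<Rightarrow> 5" where
  "g3 a = (if a = 0 then 0 else if a = 1 then 1 else 2)"

lemma key: "g3 a - g3 b = x \<Longrightarrow> a - b = f5 x"
  using z3_cases[of a] z3_cases[of b]
  by (auto simp: g3_def f5_def)

theorem proposition7p7:
  fixes V :: "'v set" and E :: "'e set" and src tgt :: "'e \<Rightarrow> 'v"
  assumes "loopless_multigraph V E src tgt"
    and "group_colorable V E src tgt TYPE(3)"
  shows "group_colorable V E src tgt TYPE(5)"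
  unfolding group_colorable_def
proof
  fix \<psi> :: "'e \<Rightarrow> 5"
  obtain c :: "'v \<Rightarrow> 3" where c: "\<forall>e\<in>E. c (tgt e) - c (src e) \<noteq> f5 (\<psi> e)"
  proof -
    have "\<forall>\<phi>::'e \<Rightarrow> 3. \<exists>c::'v \<Rightarrow> 3. \<forall>e\<in>E. c (tgt e) - c (src e) \<noteq> \<phi> e"
      using assms(2) unfolding group_colorable_def by blast
    then have "\<exists>c::'v \<Rightarrow> 3. \<forall>e\<in>E. c (tgt e) - c (src e) \<noteq> f5 (\<psi> e)"
      by (rule allE[of _ "\<lambda>e. f5 (\<psi> e)"])
    then show ?thesis using that by blast
  qed
  show "\<exists>c::'v \<Rightarrow> 5. \<forall>e\<in>E. c (tgt e) - c (src e) \<noteq> \<psi> e"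
    by (rule exI[of _ "\<lambda>v. g3 (c v)"]) (use c key in blast)
qed

end
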